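(* Let $n\ge 2$, let $v_1<\cdots<v_{n-1}$ be positive integers with $\mathrm{ML}(v_1,\ldots,v_{n-1})\ge L$, and fix $0<\varepsilon<L$. Then for every positive integer $v_n$ with $v_n\ge \left(\frac{L-\varepsilon}{\varepsilon}\right)v_{n-1}$, we have $\mathrm{ML}(v_1,\ldots,v_n)\ge L-\varepsilon$.
   Context: For a real number $x$, $\Vert x\Vert$ denotes the distance from $x$ to the nearest integer. For positive integers $v_1,\ldots,v_k$, the maximum loneliness is $\mathrm{ML}(v_1,\ldots,v_k)=\max_{t\in\mathbb{R}}\min_{1\le i\le k}\Vert t v_i\Vert$. *)

theory Defs
  imports "HOL-Analysis.Analysis"
begin

definition dist_int :: "real \<Rightarrow> real" where
  "dist_int x = (INF m\<in>(\<int>::real set). \<bar>x - m\<bar>)"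

text \<open>The maximum is attained (continuous periodic function), so Sup equals max.\<close>
definition max_lonely :: "nat list \<Rightarrow> real" where
  "max_lonely vs = (SUP t\<in>(UNIV::real set). Min ((\<lambda>v. dist_int (t * real v)) ` set vs))"

end

theory Submission
  imports Defs
begin

lemma dist_int_round: "dist_int x = \<bar>x - of_int (round x)\<bar>"
  unfolding dist_int_def
proof (rule antisym)
  show "(INF m\<in>(\<int>::real set). \<bar>x - m\<bar>) \<le> \<bar>x - of_int (round x)\<bar>"
    by (rule cINF_lower2[where x="of_int (round x)"]) (auto intro: bdd_belowI[of _ 0])
  show "\<bar>x - of_int (round x)\<bar> \<le> (INF m\<in>(\<int>::real set). \<bar>x - m\<bar>)"
    by (rule cINF_greatest) (auto elim!: Ints_cases simp: round_diff_minimal)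
qed

lemma dist_int_le_half: "dist_int x \<le> 1/2"
  using of_int_round_abs_le[of x] by (simp add: dist_int_round abs_minus_commute)

lemma dist_int_ge: "(\<And>m::int. c \<le> \<bar>x - of_int m\<bar>) \<Longrightarrow> c \<le> dist_int x"
  by (simp add: dist_int_round)

lemma dist_int_lip: "dist_int x \<le> dist_int y + \<bar>x - y\<bar>"
proof -
  have "dist_int x \<le> \<bar>x - of_int (round y)\<bar>"
    using round_diff_minimal[of x "round y"] by (simp add: dist_int_round)
  also have "\<dots> \<le> \<bar>y - of_int (round y)\<bar> + \<bar>x - y\<bar>" by simp
  finally show ?thesis by (simp add: dist_int_round)
qed

lemma find_point:
  fixes y c :: real
  assumes "0 \<le> c" "c \<le> 1/2"
  shows "\<exists>x. \<bar>x - y\<bar> \<le> c \<and> c \<le> dist_int x"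
proof -
  define k where "k = round y"
  have hk: "\<bar>y - of_int k\<bar> \<le> 1/2" using of_int_round_abs_le[of y] unfolding k_def by linarith
  have dy: "dist_int y = \<bar>y - of_int k\<bar>" by (simp add: dist_int_round k_def)
  show ?thesis
  proof (cases "c \<le> \<bar>y - of_int k\<bar>")
    case True then show ?thesis using dy assms by (intro exI[of _ y]) simp
  next
    case False
    show ?thesis
    proof (cases "y \<ge> of_int k")
      case True
      have "c \<le> dist_int (of_int k + c)"
      proof (rule dist_int_ge)
        fix m :: int
        show "c \<le> \<bar>of_int k + c - of_int m\<bar>"
        proof (cases "m \<le> k")
          case True then have "real_of_int m \<le> of_int k" by simp
          then show ?thesis by linarith
        next
          case False then have "real_of_int m \<ge> of_int k + 1" by simp
          then show ?thesis using assms by linarith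
        qed
      qed
      then show ?thesis using True False by (intro exI[of _ "of_int k + c"]) auto
    next
      case nt: False
      have "c \<le> dist_int (of_int k - c)"
      proof (rule dist_int_ge)
        fix m :: int
        show "c \<le> \<bar>of_int k - c - of_int m\<bar>"
        proof (cases "m \<ge> k")
          case True then have "real_of_int m \<ge> of_int k" by simp
          then show ?thesis by linarith
        next
          case False then have "real_of_int m \<le> of_int k - 1" by simp
          then show ?thesis using assms by linarith
        qed
      qed
      then show ?thesis using nt False by (intro exI[of _ "of_int k - c"]) auto
    qed
  qed
qed

lemma min_le_half: "vs \<noteq> [] \<Longrightarrow> Min ((\<lambda>v. dist_int (t * real v)) ` set vs) \<le> 1/2"
proof -
  assume "vs \<noteq> []"
  then obtain u where "u \<in> set vs" by (cases vs) auto
  then have "Min ((\<lambda>v. dist_int (t * real v)) ` set vs) \<le> dist_int (t * real u)" by simp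
  then show ?thesis using dist_int_le_half[of "t * real u"] by linarith
qed

lemma ml_bdd: "vs \<noteq> [] \<Longrightarrow> bdd_above ((\<lambda>t. Min ((\<lambda>v. dist_int (t * real v)) ` set vs)) ` UNIV)"
  by (rule bdd_aboveI[of _ "1/2"]) (use min_le_half in blast)

theorem proposition8p1:
  fixes n :: nat and v :: "nat \<Rightarrow> nat" and L \<epsilon> :: real
  assumes "n \<ge> 2"
    and "\<forall>i\<in>{1..n}. v i > 0"
    and "\<forall>i j. 1 \<le> i \<and> i < j \<and> j \<le> n - 1 \<longrightarrow> v i < v j"
    and "max_lonely (map v [1..<n]) \<ge> L"
    and "0 < \<epsilon>" and "\<epsilon> < L"
    and "real (v n) \<ge> ((L - \<epsilon>) / \<epsilon>) * real (v (n - 1))"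
  shows "max_lonely (map v [1..<n+1]) \<ge> L - \<epsilon>"
proof -
  define c where "c = L - \<epsilon>"
  define m where "m = real (v (n - 1))"
  define w where "w = real (v n)"
  have ne: "map v [1..<n] \<noteq> []" "map v [1..<n+1] \<noteq> []" using assms(1) by auto
  have setold: "set (map v [1..<n]) = v ` {1..<n}" by auto
  have setnew: "set (map v [1..<n+1]) = insert (v n) (v ` {1..<n})" using assms(1) by auto
  have wpos: "w > 0" using assms(1,2) unfolding w_def by auto
  have vle: "real (v i) \<le> m" if "i \<in> {1..<n}" for i
  proof (cases "i = n - 1")
    case True then show ?thesis by (simp add: m_def)
  next
    case False then have "v i < v (n-1)" using assms(3) that by auto
    then show ?thesis by (simp add: m_def)
  qed
  have L_half: "L \<le> 1/2"
  proof -
    have "max_lonely (map v [1..<n]) \<le> 1/2"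
      unfolding max_lonely_def
      by (rule cSUP_least) (use ne min_le_half in blast)+
    then show ?thesis using assms(4) by linarith
  qed
  have cpos: "c > 0" "c \<le> 1/2" using assms(5,6) L_half unfolding c_def by auto
  have cm: "c * m \<le> \<epsilon> * w"
  proof -
    have "(c / \<epsilon>) * m \<le> w" using assms(7) unfolding c_def m_def w_def by simp
    then have "\<epsilon> * ((c / \<epsilon>) * m) \<le> \<epsilon> * w" using assms(5) by (intro mult_left_mono) auto
    then show ?thesis using assms(5) by (simp add: field_simps)
  qed
  have key: "L - \<epsilon> - d \<le> max_lonely (map v [1..<n+1])" if d: "d > 0" for d
  proof -
    have "L - d < max_lonely (map v [1..<n])" using assms(4) d by linarith
    then obtain t0 where t0: "L - d < Min ((\<lambda>u. dist_int (t0 * real u)) ` set (map v [1..<n]))"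
      unfolding max_lonely_def using less_cSUP_iff[OF _ ml_bdd[OF ne(1)]] by auto
    then have t0': "L - d < dist_int (t0 * real (v i))" if "i \<in> {1..<n}" for i
      using that ne(1) by (auto simp: setold Min_gr_iff)
    obtain x where x: "\<bar>x - t0 * w\<bar> \<le> c" "c \<le> dist_int x" using find_point[OF _ cpos(2)] cpos(1)
      by (meson less_imp_le)
    define t where "t = x / w"
    have tw: "t * w = x" using wpos unfolding t_def by simp
    have tt0: "\<bar>t - t0\<bar> * w \<le> c"
    proof -
      have "\<bar>t - t0\<bar> * w = \<bar>t * w - t0 * w\<bar>" using wpos by (simp add: abs_mult left_diff_distrib[symmetric])
      then show ?thesis using x(1) tw by simp
    qed
    have "L - \<epsilon> - d \<le> Min ((\<lambda>u. dist_int (t * real u)) ` set (map v [1..<n+1]))"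
    proof (subst Min_ge_iff)
      show "finite ((\<lambda>u. dist_int (t * real u)) ` set (map v [1..<n+1]))" by simp
      show "(\<lambda>u. dist_int (t * real u)) ` set (map v [1..<n+1]) \<noteq> {}" using ne by simp
      show "\<forall>a\<in>(\<lambda>u. dist_int (t * real u)) ` set (map v [1..<n+1]). L - \<epsilon> - d \<le> a"
      proof
        fix a assume "a \<in> (\<lambda>u. dist_int (t * real u)) ` set (map v [1..<n+1])"
        then consider "a = dist_int (t * w)" | i where "i \<in> {1..<n}" "a = dist_int (t * real (v i))"
          unfolding setnew w_def by auto
        then show "L - \<epsilon> - d \<le> a"
        proof cases
          case 1 then show ?thesis using x(2) tw d unfolding c_def by simp
        next
          case (2 i)
          have vi: "real (v i) \<le> m" "0 \<le> real (v i)" using vle[OF 2(1)] by auto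
          have "\<bar>t - t0\<bar> * real (v i) \<le> \<bar>t - t0\<bar> * m" using vi by (simp add: mult_left_mono)
          have "(\<bar>t - t0\<bar> * m) * w \<le> c * m"
            using tt0 vle[OF 2(1)] by (smt (verit) mult.commute mult.left_commute mult_right_mono of_nat_0_le_iff)
          also have "\<dots> \<le> \<epsilon> * w" by (rule cm)
          finally have "\<bar>t - t0\<bar> * m \<le> \<epsilon>" using wpos by simp
          then have diff: "\<bar>t * real (v i) - t0 * real (v i)\<bar> \<le> \<epsilon>"
            using \<open>\<bar>t - t0\<bar> * real (v i) \<le> \<bar>t - t0\<bar> * m\<close>
            by (simp add: abs_mult left_diff_distrib[symmetric])
          have "dist_int (t0 * real (v i)) \<le> dist_int (t * real (v i)) + \<bar>t0 * real (v i) - t * real (v i)\<bar>"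
            by (rule dist_int_lip)
          then show ?thesis using t0'[OF 2(1)] diff 2(2) by (simp add: abs_minus_commute)
        qed
      qed
    qed
    also have "\<dots> \<le> max_lonely (map v [1..<n+1])"
      unfolding max_lonely_def by (rule cSUP_upper[OF _ ml_bdd[OF ne(2)]]) simp
    finally show ?thesis .
  qed
  show ?thesis
  proof (rule field_le_epsilon)
    fix d :: real assume "d > 0"
    then show "L - \<epsilon> \<le> max_lonely (map v [1..<n+1]) + d" using key[of d] by linarith
  qed
qed

end
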